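(* Let $G$ be a connected graph, and let $L$ be a list-assignment with $|L(u)|\ge\deg(u)+1$ for all $u\in V(G)$ and $|L(v)|\ge\deg(v)+2$ for some vertex $v$. Let $\alpha,\beta$ be two unfrozen $L$-colourings. Fix $w\in V(G)$ and let $P$ be a shortest $v,w$-path. There exists a recolouring sequence $\mathcal{S}$ from $\alpha$ to some $L$-colouring $\gamma$ such that (i) $\gamma(w)=\beta(w)$, (ii) $v$ is unfrozen under $\gamma$, (iii) every vertex recoloured during $\mathcal{S}$ belongs to $V(P)\cup(N(w)\cap\alpha^{-1}(\beta(w)))$, and (iv) $|\mathcal{S}|\le\deg(w)+2+2|V(P)|$.
   Context: An $L$-colouring is a proper colouring $\varphi$ with $\varphi(v)\in L(v)$ for all $v$. A recolouring sequence is a sequence of single-vertex recolouring steps, each changing the colour of one vertex to another colour of its list so that the colouring remains proper; $|\mathcal{S}|$ is its number of steps. A vertex $u$ is frozen under $\varphi$ if every colour of $L(u)\setminus\{\varphi(u)\}$ appears on a neighbour of $u$, and unfrozen otherwise; a colouring is unfrozen if some vertex is unfrozen under it. *)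

theory Defs
  imports Main
begin

definition graph :: "'a set \<Rightarrow> ('a \<Rightarrow> 'a \<Rightarrow> bool) \<Rightarrow> bool" where
  "graph V E \<longleftrightarrow> finite V \<and> (\<forall>x y. E x y \<longrightarrow> E y x) \<and> (\<forall>x. \<not> E x x)
     \<and> (\<forall>x y. E x y \<longrightarrow> x \<in> V \<and> y \<in> V)"

definition nbhd :: "'a set \<Rightarrow> ('a \<Rightarrow> 'a \<Rightarrow> bool) \<Rightarrow> 'a \<Rightarrow> 'a set" where
  "nbhd V E u = {x \<in> V. E u x}"

definition deg :: "'a set \<Rightarrow> ('a \<Rightarrow> 'a \<Rightarrow> bool) \<Rightarrow> 'a \<Rightarrow> nat" where
  "deg V E u = card (nbhd V E u)"

definition is_path :: "'a set \<Rightarrow> ('a \<Rightarrow> 'a \<Rightarrow> bool) \<Rightarrow> 'a list \<Rightarrow> bool" where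
  "is_path V E p \<longleftrightarrow> p \<noteq> [] \<and> set p \<subseteq> V \<and> distinct p
     \<and> (\<forall>i. Suc i < length p \<longrightarrow> E (p ! i) (p ! Suc i))"

definition connected_graph :: "'a set \<Rightarrow> ('a \<Rightarrow> 'a \<Rightarrow> bool) \<Rightarrow> bool" where
  "connected_graph V E \<longleftrightarrow> V \<noteq> {} \<and>
     (\<forall>x\<in>V. \<forall>y\<in>V. \<exists>p. is_path V E p \<and> hd p = x \<and> last p = y)"

definition shortest_path :: "'a set \<Rightarrow> ('a \<Rightarrow> 'a \<Rightarrow> bool) \<Rightarrow> 'a \<Rightarrow> 'a \<Rightarrow> 'a list \<Rightarrow> bool" where
  "shortest_path V E x y p \<longleftrightarrow> is_path V E p \<and> hd p = x \<and> last p = y \<and>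
     (\<forall>q. is_path V E q \<and> hd q = x \<and> last q = y \<longrightarrow> length p \<le> length q)"

definition L_colouring :: "'a set \<Rightarrow> ('a \<Rightarrow> 'a \<Rightarrow> bool) \<Rightarrow> ('a \<Rightarrow> 'c set) \<Rightarrow> ('a \<Rightarrow> 'c) \<Rightarrow> bool" where
  "L_colouring V E L \<phi> \<longleftrightarrow> (\<forall>u\<in>V. \<phi> u \<in> L u) \<and> (\<forall>x\<in>V. \<forall>y\<in>V. E x y \<longrightarrow> \<phi> x \<noteq> \<phi> y)"

definition frozen :: "'a set \<Rightarrow> ('a \<Rightarrow> 'a \<Rightarrow> bool) \<Rightarrow> ('a \<Rightarrow> 'c set) \<Rightarrow> ('a \<Rightarrow> 'c) \<Rightarrow> 'a \<Rightarrow> bool" where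
  "frozen V E L \<phi> u \<longleftrightarrow> (\<forall>c \<in> L u - {\<phi> u}. \<exists>x \<in> nbhd V E u. \<phi> x = c)"

definition unfrozen_colouring :: "'a set \<Rightarrow> ('a \<Rightarrow> 'a \<Rightarrow> bool) \<Rightarrow> ('a \<Rightarrow> 'c set) \<Rightarrow> ('a \<Rightarrow> 'c) \<Rightarrow> bool" where
  "unfrozen_colouring V E L \<phi> \<longleftrightarrow> (\<exists>u\<in>V. \<not> frozen V E L \<phi> u)"

fun valid_recol :: "'a set \<Rightarrow> ('a \<Rightarrow> 'a \<Rightarrow> bool) \<Rightarrow> ('a \<Rightarrow> 'c set) \<Rightarrow> ('a \<Rightarrow> 'c) \<Rightarrow> ('a \<times> 'c) list \<Rightarrow> bool" where
  "valid_recol V E L \<phi> [] = True"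
| "valid_recol V E L \<phi> ((u, c) # S) \<longleftrightarrow> u \<in> V \<and> c \<noteq> \<phi> u \<and> L_colouring V E L (\<phi>(u := c))
      \<and> valid_recol V E L (\<phi>(u := c)) S"

fun apply_recol :: "('a \<Rightarrow> 'c) \<Rightarrow> ('a \<times> 'c) list \<Rightarrow> ('a \<Rightarrow> 'c)" where
  "apply_recol \<phi> [] = \<phi>"
| "apply_recol \<phi> ((u, c) # S) = apply_recol (\<phi>(u := c)) S"

definition recol_seq :: "'a set \<Rightarrow> ('a \<Rightarrow> 'a \<Rightarrow> bool) \<Rightarrow> ('a \<Rightarrow> 'c set) \<Rightarrow> ('a \<Rightarrow> 'c) \<Rightarrow> ('a \<times> 'c) list \<Rightarrow> ('a \<Rightarrow> 'c) \<Rightarrow> bool" where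
  "recol_seq V E L \<alpha> S \<gamma> \<longleftrightarrow> L_colouring V E L \<alpha> \<and> valid_recol V E L \<alpha> S \<and> apply_recol \<alpha> S = \<gamma>"

end

theory Submission
  imports Defs
begin

lemma nbhd_finite: "graph V E \<Longrightarrow> finite (nbhd V E u)"
  unfolding graph_def nbhd_def by auto

lemma nbhd_sub: "nbhd V E u \<subseteq> V"
  unfolding nbhd_def by auto

lemma col_in: "L_colouring V E L \<phi> \<Longrightarrow> u \<in> V \<Longrightarrow> \<phi> u \<in> L u"
  unfolding L_colouring_def by auto

lemma L_fin: "\<forall>u\<in>V. deg V E u + 1 \<le> card (L u) \<Longrightarrow> u \<in> V \<Longrightarrow> finite (L u)"
  by (metis card.infinite add_is_0 le_zero_eq one_neq_zero)

lemma frozen_counts: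
  assumes g: "graph V E" and dc: "\<forall>u\<in>V. deg V E u + 1 \<le> card (L u)"
    and col: "L_colouring V E L \<phi>" and x: "x \<in> V" and fr: "frozen V E L \<phi> x"
  shows "inj_on \<phi> (nbhd V E x) \<and> \<phi> ` nbhd V E x = L x - {\<phi> x}"
proof -
  let ?N = "nbhd V E x"
  have fN: "finite ?N" using g by (rule nbhd_finite)
  have fL: "finite (L x)" using L_fin[OF dc x] .
  have inL: "\<phi> x \<in> L x" using col x by (rule col_in)
  have sub: "L x - {\<phi> x} \<subseteq> \<phi> ` ?N" using fr unfolding frozen_def by (metis (mono_tags, lifting) imageI subsetI)
  have c1: "card (L x - {\<phi> x}) = card (L x) - 1" using fL inL by simp
  have c2: "card (L x) - 1 \<ge> card ?N" using dc x unfolding deg_def by auto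
  have c3: "card (\<phi> ` ?N) \<le> card ?N" by (rule card_image_le[OF fN])
  have c4: "card (L x - {\<phi> x}) \<le> card (\<phi> ` ?N)" by (rule card_mono[OF finite_imageI[OF fN] sub])
  have eq: "L x - {\<phi> x} = \<phi> ` ?N"
    by (rule card_subset_eq[OF finite_imageI[OF fN] sub]) (use c1 c2 c3 c4 in linarith)
  have "card (\<phi> ` ?N) = card ?N" using c1 c2 c3 c4 by linarith
  then have "inj_on \<phi> ?N" by (rule eq_card_imp_inj_on[OF fN])
  then show ?thesis using eq by simp
qed

lemma slack_unfrozen:
  assumes g: "graph V E" and col: "L_colouring V E L \<phi>" and v: "v \<in> V"
    and s: "deg V E v + 2 \<le> card (L v)"
  shows "\<not> frozen V E L \<phi> v"
proof
  assume fr: "frozen V E L \<phi> v"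
  let ?N = "nbhd V E v"
  have fN: "finite ?N" using g by (rule nbhd_finite)
  have fL: "finite (L v)" using s by (metis card.infinite not_numeral_le_zero add_is_0 le_zero_eq zero_neq_numeral)
  have inL: "\<phi> v \<in> L v" using col v by (rule col_in)
  have sub: "L v - {\<phi> v} \<subseteq> \<phi> ` ?N" using fr unfolding frozen_def by (metis (mono_tags, lifting) imageI subsetI)
  have c1: "card (L v - {\<phi> v}) = card (L v) - 1" using fL inL by simp
  have c3: "card (\<phi> ` ?N) \<le> card ?N" by (rule card_image_le[OF fN])
  have c4: "card (L v - {\<phi> v}) \<le> card (\<phi> ` ?N)" by (rule card_mono[OF finite_imageI[OF fN] sub])
  show False using c1 c3 c4 s unfolding deg_def by linarith
qed

lemma unfreeze_nbr:
  assumes g: "graph V E" and dc: "\<forall>u\<in>V. deg V E u + 1 \<le> card (L u)"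
    and col: "L_colouring V E L \<phi>" and x: "x \<in> V" and fr: "frozen V E L \<phi> x"
    and y: "y \<in> nbhd V E x" and d: "d \<noteq> \<phi> y"
  shows "\<not> frozen V E L (\<phi>(y:=d)) x"
proof -
  from frozen_counts[OF g dc col x fr] have inj: "inj_on \<phi> (nbhd V E x)"
    and eq: "\<phi> ` nbhd V E x = L x - {\<phi> x}" by auto
  have xy: "x \<noteq> y" using g y unfolding graph_def nbhd_def by auto
  have "\<phi> y \<in> L x - {\<phi> x}" using eq y by blast
  moreover have "\<forall>z\<in>nbhd V E x. (\<phi>(y:=d)) z \<noteq> \<phi> y"
  proof
    fix z assume z: "z \<in> nbhd V E x"
    show "(\<phi>(y:=d)) z \<noteq> \<phi> y"
    proof (cases "z = y")
      case True then show ?thesis using d by simp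
    next
      case False then show ?thesis using inj z y by (auto dest: inj_onD)
    qed
  qed
  ultimately show ?thesis using xy unfolding frozen_def by force
qed

lemma recolour_ok:
  assumes g: "graph V E" and col: "L_colouring V E L \<phi>" and x: "x \<in> V"
    and f: "f \<in> L x" and nb: "\<forall>y\<in>nbhd V E x. \<phi> y \<noteq> f"
  shows "L_colouring V E L (\<phi>(x:=f))"
  unfolding L_colouring_def
proof (intro conjI ballI impI)
  fix u assume "u \<in> V" then show "(\<phi>(x := f)) u \<in> L u" using col f unfolding L_colouring_def by auto
next
  fix p q assume p: "p \<in> V" and q: "q \<in> V" and e: "E p q"
  have sym: "E q p" using g e unfolding graph_def by blast
  have pq: "p \<noteq> q" using g e unfolding graph_def by blast
  show "(\<phi>(x := f)) p \<noteq> (\<phi>(x := f)) q"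
  proof (cases "p = x")
    case True then show ?thesis using nb q e pq unfolding nbhd_def by auto
  next
    case False
    show ?thesis
    proof (cases "q = x")
      case True then show ?thesis using nb p sym False unfolding nbhd_def by fastforce
    next
      case False2: False
      then show ?thesis using False col p q e unfolding L_colouring_def by auto
    qed
  qed
qed

lemma unfrozen_free: "\<not> frozen V E L \<phi> x \<Longrightarrow> \<exists>f\<in>L x - {\<phi> x}. \<forall>y\<in>nbhd V E x. \<phi> y \<noteq> f"
  unfolding frozen_def by blast

lemma frozen_agree:
  "(\<forall>y\<in>insert x (nbhd V E x). \<psi> y = \<phi> y) \<Longrightarrow> frozen V E L \<psi> x = frozen V E L \<phi> x"
  unfolding frozen_def by auto

lemma valid_append:
  "valid_recol V E L \<phi> (S1 @ S2) \<longleftrightarrow> valid_recol V E L \<phi> S1 \<and> valid_recol V E L (apply_recol \<phi> S1) S2"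
  by (induction S1 arbitrary: \<phi>) auto

lemma apply_append: "apply_recol \<phi> (S1 @ S2) = apply_recol (apply_recol \<phi> S1) S2"
  by (induction S1 arbitrary: \<phi>) auto

lemma valid_col: "L_colouring V E L \<phi> \<Longrightarrow> valid_recol V E L \<phi> S \<Longrightarrow> L_colouring V E L (apply_recol \<phi> S)"
  by (induction S arbitrary: \<phi>) auto

lemma recol_seq_col: "recol_seq V E L \<phi> S \<psi> \<Longrightarrow> L_colouring V E L \<psi>"
  unfolding recol_seq_def using valid_col by blast

lemma recol_seq_trans:
  "recol_seq V E L \<phi> S1 \<psi> \<Longrightarrow> recol_seq V E L \<psi> S2 \<chi> \<Longrightarrow> recol_seq V E L \<phi> (S1 @ S2) \<chi>"
  unfolding recol_seq_def by (auto simp: valid_append apply_append)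

lemma recol_seq_nil: "L_colouring V E L \<phi> \<Longrightarrow> recol_seq V E L \<phi> [] \<phi>"
  unfolding recol_seq_def by simp

lemma recol_seq_single:
  "L_colouring V E L \<phi> \<Longrightarrow> x \<in> V \<Longrightarrow> f \<noteq> \<phi> x \<Longrightarrow> L_colouring V E L (\<phi>(x:=f))
   \<Longrightarrow> recol_seq V E L \<phi> [(x,f)] (\<phi>(x:=f))"
  unfolding recol_seq_def by simp

lemma apply_outside: "y \<notin> fst ` set S \<Longrightarrow> apply_recol \<phi> S y = \<phi> y"
  by (induction S arbitrary: \<phi>) auto

lemma recol_seq_outside: "recol_seq V E L \<phi> S \<psi> \<Longrightarrow> y \<notin> fst ` set S \<Longrightarrow> \<psi> y = \<phi> y"
  unfolding recol_seq_def using apply_outside by metis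

definition cn :: "'a set \<Rightarrow> ('a \<Rightarrow> 'a \<Rightarrow> bool) \<Rightarrow> ('a \<Rightarrow> 'c) \<Rightarrow> 'a \<Rightarrow> 'c \<Rightarrow> 'a set" where
  "cn V E \<phi> w c = {x \<in> nbhd V E w. \<phi> x = c}"

lemma cn_finite: "graph V E \<Longrightarrow> finite (cn V E \<phi> w c)"
  unfolding cn_def using nbhd_finite[of V E w] by auto

lemma cn_card: "graph V E \<Longrightarrow> card (cn V E \<phi> w c) \<le> deg V E w"
  unfolding cn_def deg_def by (rule card_mono[OF nbhd_finite]) auto


lemma phase1:
  assumes g: "graph V E" and dc: "\<forall>u\<in>V. deg V E u + 1 \<le> card (L u)" and w: "w \<in> V"
  shows "L_colouring V E L \<phi> \<Longrightarrow> \<exists>S \<psi>. recol_seq V E L \<phi> S \<psi> \<and> fst ` set S \<subseteq> cn V E \<phi> w c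
     \<and> (\<forall>y. y \<notin> cn V E \<phi> w c \<longrightarrow> \<psi> y = \<phi> y) \<and> cn V E \<psi> w c \<subseteq> cn V E \<phi> w c
     \<and> length S + card (cn V E \<psi> w c) \<le> card (cn V E \<phi> w c)
     \<and> (\<forall>x\<in>cn V E \<psi> w c. frozen V E L \<psi> x \<and> frozen V E L \<phi> x)"
proof (induction "card (cn V E \<phi> w c)" arbitrary: \<phi> rule: less_induct)
  case less
  show ?case
  proof (cases "\<forall>x\<in>cn V E \<phi> w c. frozen V E L \<phi> x")
    case True
    then show ?thesis using recol_seq_nil[OF less.prems] by (intro exI[of _ "[]"] exI[of _ \<phi>]) auto
  next
    case False
    then obtain x where xc: "x \<in> cn V E \<phi> w c" and nf: "\<not> frozen V E L \<phi> x" by blast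
    have xV: "x \<in> V" and phx: "\<phi> x = c" using xc unfolding cn_def nbhd_def by auto
    obtain f where f: "f \<in> L x - {\<phi> x}" and fn: "\<forall>y\<in>nbhd V E x. \<phi> y \<noteq> f"
      using unfrozen_free[OF nf] by blast
    define \<phi>' where "\<phi>' = \<phi>(x:=f)"
    have col': "L_colouring V E L \<phi>'" unfolding \<phi>'_def using recolour_ok[OF g less.prems xV _ fn] f by blast
    have st: "recol_seq V E L \<phi> [(x,f)] \<phi>'" unfolding \<phi>'_def
      using recol_seq_single[OF less.prems xV] f col' \<phi>'_def by auto
    have cn': "cn V E \<phi>' w c = cn V E \<phi> w c - {x}" unfolding cn_def \<phi>'_def using f phx by auto
    have lt: "card (cn V E \<phi>' w c) < card (cn V E \<phi> w c)"
      unfolding cn' using xc cn_finite[OF g] by (meson card_Diff1_less)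
    obtain S \<psi> where r: "recol_seq V E L \<phi>' S \<psi>" and r1: "fst ` set S \<subseteq> cn V E \<phi>' w c"
      and r2: "\<forall>y. y \<notin> cn V E \<phi>' w c \<longrightarrow> \<psi> y = \<phi>' y" and r3: "cn V E \<psi> w c \<subseteq> cn V E \<phi>' w c"
      and r4: "length S + card (cn V E \<psi> w c) \<le> card (cn V E \<phi>' w c)"
      and r5: "\<forall>x\<in>cn V E \<psi> w c. frozen V E L \<psi> x \<and> frozen V E L \<phi>' x"
      using less.hyps[OF lt col'] by blast
    have "recol_seq V E L \<phi> ([(x,f)] @ S) \<psi>" using recol_seq_trans[OF st r] .
    moreover have "fst ` set ([(x,f)] @ S) \<subseteq> cn V E \<phi> w c" using r1 xc cn' by auto
    moreover have "\<forall>y. y \<notin> cn V E \<phi> w c \<longrightarrow> \<psi> y = \<phi> y" using r2 cn' xc unfolding \<phi>'_def by auto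
    moreover have "cn V E \<psi> w c \<subseteq> cn V E \<phi> w c" using r3 cn' by auto
    moreover have "length ([(x,f)] @ S) + card (cn V E \<psi> w c) \<le> card (cn V E \<phi> w c)"
      using r4 lt by simp
    moreover have "\<forall>z\<in>cn V E \<psi> w c. frozen V E L \<psi> z \<and> frozen V E L \<phi> z"
    proof
      fix z assume z: "z \<in> cn V E \<psi> w c"
      have zc: "z \<in> cn V E \<phi> w c" "z \<noteq> x" using z r3 cn' by auto
      have zV: "z \<in> V" and phz: "\<phi> z = c" using zc unfolding cn_def nbhd_def by auto
      have nE: "\<not> E z x" using less.prems zV xV phz phx unfolding L_colouring_def by metis
      have "\<forall>y\<in>insert z (nbhd V E z). \<phi>' y = \<phi> y"
        using nE zc unfolding \<phi>'_def nbhd_def by auto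
      then have "frozen V E L \<phi>' z = frozen V E L \<phi> z" by (rule frozen_agree)
      then show "frozen V E L \<psi> z \<and> frozen V E L \<phi> z" using r5 z by auto
    qed
    ultimately show ?thesis by blast
  qed
qed


lemma final_step:
  assumes g: "graph V E" and col: "L_colouring V E L \<phi>" and w: "w \<in> V" and c: "c \<in> L w"
    and ne: "\<phi> w \<noteq> c" and e: "cn V E \<phi> w c = {}"
  shows "recol_seq V E L \<phi> [(w,c)] (\<phi>(w:=c))"
proof -
  have "\<forall>y\<in>nbhd V E w. \<phi> y \<noteq> c" using e unfolding cn_def by auto
  then have "L_colouring V E L (\<phi>(w:=c))" using recolour_ok[OF g col w c] by blast
  then show ?thesis using recol_seq_single[OF col w] ne by auto
qed

lemma finishB:
  assumes g: "graph V E" and dc: "\<forall>u\<in>V. deg V E u + 1 \<le> card (L u)" and w: "w \<in> V"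
    and col: "L_colouring V E L \<theta>" and c: "c \<in> L w" and ne: "\<theta> w \<noteq> c"
    and fr: "\<forall>x\<in>cn V E \<theta> w c. frozen V E L \<theta> x"
    and wu: "cn V E \<theta> w c \<noteq> {} \<longrightarrow> \<not> frozen V E L \<theta> w"
  shows "\<exists>S \<gamma>. recol_seq V E L \<theta> S \<gamma> \<and> \<gamma> w = c \<and> fst ` set S \<subseteq> insert w (cn V E \<theta> w c)
     \<and> length S \<le> card (cn V E \<theta> w c) + 2"
proof (cases "cn V E \<theta> w c = {}")
  case True
  show ?thesis using final_step[OF g col w c ne True] by (intro exI[of _ "[(w,c)]"] exI) auto
next
  case False
  then have nf: "\<not> frozen V E L \<theta> w" using wu by blast
  obtain e where e: "e \<in> L w - {\<theta> w}" and en: "\<forall>y\<in>nbhd V E w. \<theta> y \<noteq> e"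
    using unfrozen_free[OF nf] by blast
  obtain x0 where x0: "x0 \<in> cn V E \<theta> w c" using False by blast
  have ec: "e \<noteq> c" using x0 en unfolding cn_def by auto
  define \<theta>2 where "\<theta>2 = \<theta>(w:=e)"
  have col2: "L_colouring V E L \<theta>2" unfolding \<theta>2_def using recolour_ok[OF g col w _ en] e by blast
  have st1: "recol_seq V E L \<theta> [(w,e)] \<theta>2" unfolding \<theta>2_def
    using recol_seq_single[OF col w] e col2 \<theta>2_def by auto
  have wn: "w \<notin> nbhd V E w" using g unfolding graph_def nbhd_def by auto
  have cn2: "cn V E \<theta>2 w c = cn V E \<theta> w c" unfolding cn_def \<theta>2_def using wn by auto
  have unf: "\<forall>x\<in>cn V E \<theta>2 w c. \<not> frozen V E L \<theta>2 x"
  proof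
    fix x assume x: "x \<in> cn V E \<theta>2 w c"
    then have xc: "x \<in> cn V E \<theta> w c" using cn2 by simp
    have xV: "x \<in> V" and Ewx: "E w x" using xc unfolding cn_def nbhd_def by auto
    have "w \<in> nbhd V E x" using Ewx g w unfolding graph_def nbhd_def by auto
    then show "\<not> frozen V E L \<theta>2 x" unfolding \<theta>2_def
      using unfreeze_nbr[OF g dc col xV _ _, of w e] fr xc e by auto
  qed
  obtain S1 \<psi> where p: "recol_seq V E L \<theta>2 S1 \<psi>" and p1: "fst ` set S1 \<subseteq> cn V E \<theta>2 w c"
    and p2: "\<forall>y. y \<notin> cn V E \<theta>2 w c \<longrightarrow> \<psi> y = \<theta>2 y" and p3: "cn V E \<psi> w c \<subseteq> cn V E \<theta>2 w c"
    and p4: "length S1 + card (cn V E \<psi> w c) \<le> card (cn V E \<theta>2 w c)"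
    and p5: "\<forall>x\<in>cn V E \<psi> w c. frozen V E L \<psi> x \<and> frozen V E L \<theta>2 x"
    using phase1[OF g dc w col2, of c] by blast
  have emp: "cn V E \<psi> w c = {}" using p5 unf p3 by blast
  have psw: "\<psi> w = e" using p2 wn cn2 unfolding cn_def \<theta>2_def by auto
  have colp: "L_colouring V E L \<psi>" using recol_seq_col[OF p] .
  have st3: "recol_seq V E L \<psi> [(w,c)] (\<psi>(w:=c))" using final_step[OF g colp w c _ emp] psw ec by auto
  have "recol_seq V E L \<theta> ([(w,e)] @ S1 @ [(w,c)]) (\<psi>(w:=c))"
    using recol_seq_trans[OF st1 recol_seq_trans[OF p st3]] .
  moreover have "fst ` set ([(w,e)] @ S1 @ [(w,c)]) \<subseteq> insert w (cn V E \<theta> w c)" using p1 cn2 by auto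
  moreover have "length ([(w,e)] @ S1 @ [(w,c)]) \<le> card (cn V E \<theta> w c) + 2" using p4 cn2 by simp
  ultimately show ?thesis by (intro exI[of _ "[(w,e)] @ S1 @ [(w,c)]"] exI[of _ "\<psi>(w:=c)"]) auto
qed

lemma finishC:
  assumes g: "graph V E" and dc: "\<forall>u\<in>V. deg V E u + 1 \<le> card (L u)" and w: "w \<in> V"
    and col: "L_colouring V E L \<theta>" and c: "c \<in> L w" and ne: "\<theta> w \<noteq> c"
    and sub: "cn V E \<theta> w c \<subseteq> {x}"
    and cond: "x \<in> cn V E \<theta> w c \<and> frozen V E L \<theta> x \<longrightarrow> \<not> frozen V E L \<theta> w"
  shows "\<exists>S \<gamma>. recol_seq V E L \<theta> S \<gamma> \<and> \<gamma> w = c \<and> fst ` set S \<subseteq> {x, w} \<and> length S \<le> 3"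
proof (cases "x \<in> cn V E \<theta> w c \<and> \<not> frozen V E L \<theta> x")
  case True
  then have xc: "x \<in> cn V E \<theta> w c" and nf: "\<not> frozen V E L \<theta> x" by auto
  have xV: "x \<in> V" and phx: "\<theta> x = c" and Ewx: "E w x" using xc unfolding cn_def nbhd_def by auto
  have xw: "x \<noteq> w" using g Ewx unfolding graph_def by auto
  obtain f where f: "f \<in> L x - {\<theta> x}" and fn: "\<forall>y\<in>nbhd V E x. \<theta> y \<noteq> f"
    using unfrozen_free[OF nf] by blast
  define \<theta>' where "\<theta>' = \<theta>(x:=f)"
  have col': "L_colouring V E L \<theta>'" unfolding \<theta>'_def using recolour_ok[OF g col xV _ fn] f by blast
  have st: "recol_seq V E L \<theta> [(x,f)] \<theta>'" unfolding \<theta>'_def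
    using recol_seq_single[OF col xV] f col' \<theta>'_def by auto
  have e: "cn V E \<theta>' w c = {}" using sub f phx unfolding cn_def \<theta>'_def by auto
  have "\<theta>' w \<noteq> c" using ne xw unfolding \<theta>'_def by auto
  then obtain S \<gamma> where r: "recol_seq V E L \<theta>' S \<gamma>" "\<gamma> w = c" "fst ` set S \<subseteq> insert w (cn V E \<theta>' w c)"
     "length S \<le> card (cn V E \<theta>' w c) + 2"
    using finishB[OF g dc w col' c] e by blast
  show ?thesis using recol_seq_trans[OF st r(1)] r e
    by (intro exI[of _ "[(x,f)] @ S"] exI[of _ \<gamma>]) auto
next
  case False
  have fin: "finite {x}" by simp
  have cd: "card (cn V E \<theta> w c) \<le> 1" using card_mono[OF fin sub] by simp
  have "\<forall>y\<in>cn V E \<theta> w c. frozen V E L \<theta> y" using False sub by auto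
  moreover have "cn V E \<theta> w c \<noteq> {} \<longrightarrow> \<not> frozen V E L \<theta> w" using sub cond False by auto
  ultimately obtain S \<gamma> where r: "recol_seq V E L \<theta> S \<gamma>" "\<gamma> w = c" "fst ` set S \<subseteq> insert w (cn V E \<theta> w c)"
     "length S \<le> card (cn V E \<theta> w c) + 2"
    using finishB[OF g dc w col c ne] by blast
  show ?thesis using r sub cd by (intro exI[of _ S] exI[of _ \<gamma>]) auto
qed

lemma propagate:
  assumes g: "graph V E" and dc: "\<forall>u\<in>V. deg V E u + 1 \<le> card (L u)" and v: "v \<in> V"
    and s: "deg V E v + 2 \<le> card (L v)" and col: "L_colouring V E L \<phi>"
  shows "Q \<noteq> [] \<Longrightarrow> hd Q = v \<Longrightarrow> set Q \<subseteq> V \<Longrightarrow> (\<forall>i. Suc i < length Q \<longrightarrow> E (Q!i) (Q!Suc i))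
    \<Longrightarrow> \<exists>S \<psi>. recol_seq V E L \<phi> S \<psi> \<and> fst ` set S \<subseteq> set (butlast Q) \<and> length S + 1 \<le> length Q
        \<and> \<not> frozen V E L \<psi> (last Q)"
proof (induction Q rule: rev_induct)
  case Nil then show ?case by simp
next
  case (snoc y Q')
  show ?case
  proof (cases "Q' = []")
    case True
    then have "y = v" using snoc.prems by simp
    then show ?thesis using True slack_unfrozen[OF g col v s] recol_seq_nil[OF col]
      by (intro exI[of _ "[]"] exI[of _ \<phi>]) auto
  next
    case False
    have adj: "\<forall>i. Suc i < length Q' \<longrightarrow> E (Q'!i) (Q'!Suc i)"
    proof (intro allI impI)
      fix i assume "Suc i < length Q'"
      then show "E (Q'!i) (Q'!Suc i)" using snoc.prems(4)[rule_format, of i] by (simp add: nth_append)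
    qed
    obtain S' \<psi>' where r: "recol_seq V E L \<phi> S' \<psi>'" and r1: "fst ` set S' \<subseteq> set (butlast Q')"
      and r2: "length S' + 1 \<le> length Q'" and r3: "\<not> frozen V E L \<psi>' (last Q')"
      using snoc.IH[OF False] snoc.prems False adj by auto
    let ?x = "last Q'"
    have lQ: "length Q' \<ge> 1" using False by (cases Q') auto
    have "E (Q' ! (length Q' - 1)) y"
    proof -
      have e1: "Suc (length Q' - 1) = length Q'" using lQ by simp
      have "E ((Q' @ [y]) ! (length Q' - 1)) ((Q' @ [y]) ! Suc (length Q' - 1))"
        using snoc.prems(4)[rule_format, of "length Q' - 1"] lQ by simp
      moreover have "length Q' - 1 < length Q'" using lQ by simp
      ultimately show ?thesis unfolding e1 by (simp add: nth_append)
    qed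
    then have Exy: "E ?x y" using False by (simp add: last_conv_nth)
    have xV: "?x \<in> V" and yV: "y \<in> V" using snoc.prems(3) False by auto
    have colp: "L_colouring V E L \<psi>'" using recol_seq_col[OF r] .
    show ?thesis
    proof (cases "frozen V E L \<psi>' y")
      case False2: False
      then show ?thesis using r r1 r2 by (intro exI[of _ S'] exI[of _ \<psi>']) (auto dest: in_set_butlastD)
    next
      case True
      obtain f where f: "f \<in> L ?x - {\<psi>' ?x}" and fn: "\<forall>z\<in>nbhd V E ?x. \<psi>' z \<noteq> f"
        using unfrozen_free[OF r3] by blast
      define \<psi> where "\<psi> = \<psi>'(?x:=f)"
      have col': "L_colouring V E L \<psi>" unfolding \<psi>_def using recolour_ok[OF g colp xV _ fn] f by blast
      have st: "recol_seq V E L \<psi>' [(?x,f)] \<psi>" unfolding \<psi>_def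
        using recol_seq_single[OF colp xV] f col' \<psi>_def by auto
      have "?x \<in> nbhd V E y" using Exy g xV unfolding graph_def nbhd_def by auto
      then have "\<not> frozen V E L \<psi> y" unfolding \<psi>_def using unfreeze_nbr[OF g dc colp yV True] f by auto
      moreover have "fst ` set (S' @ [(?x,f)]) \<subseteq> set (butlast (Q' @ [y]))"
        using r1 False by (auto dest: in_set_butlastD)
      ultimately show ?thesis using recol_seq_trans[OF r st] r2
        by (intro exI[of _ "S' @ [(?x,f)]"] exI[of _ \<psi>]) auto
    qed
  qed
qed


lemma sp_facts:
  assumes g: "graph V E" and sp: "shortest_path V E v w P" and vw: "v \<noteq> w"
  shows "butlast P \<noteq> [] \<and> hd (butlast P) = v \<and> set (butlast P) \<subseteq> V
    \<and> (\<forall>i. Suc i < length (butlast P) \<longrightarrow> E (butlast P ! i) (butlast P ! Suc i))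
    \<and> E (last (butlast P)) w \<and> length (butlast P) + 1 = length P
    \<and> (\<forall>y\<in>set (butlast (butlast P)). y \<noteq> w \<and> \<not> E y w)"
proof -
  have ip: "is_path V E P" and hP: "hd P = v" and lP: "last P = w"
    and mn: "\<forall>q. is_path V E q \<and> hd q = v \<and> last q = w \<longrightarrow> length P \<le> length q"
    using sp unfolding shortest_path_def by auto
  have Pne: "P \<noteq> []" and PV: "set P \<subseteq> V" and dP: "distinct P"
    and adj: "\<forall>i. Suc i < length P \<longrightarrow> E (P ! i) (P ! Suc i)" using ip unfolding is_path_def by auto
  define n where "n = length P"
  have n2: "n \<ge> 2"
  proof (rule ccontr)
    assume "\<not> n \<ge> 2"
    moreover have "n \<ge> 1" using Pne n_def by (cases P) auto
    ultimately have "n = 1" by linarith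
    then have "hd P = last P" using Pne n_def by (cases P) auto
    then show False using hP lP vw by simp
  qed
  have lb: "length (butlast P) = n - 1" using n_def by simp
  have Qne: "butlast P \<noteq> []"
  proof
    assume "butlast P = []"
    then have "length (butlast P) = 0" by simp
    then show False using lb n2 by simp
  qed
  have nbP: "\<And>i. i < n - 1 \<Longrightarrow> butlast P ! i = P ! i" using lb by (simp add: nth_butlast)
  have hQ: "hd (butlast P) = v" using Qne nbP[of 0] n2 hP Pne by (simp add: hd_conv_nth)
  have QV: "set (butlast P) \<subseteq> V" using PV by (auto dest: in_set_butlastD)
  have adjQ: "\<forall>i. Suc i < length (butlast P) \<longrightarrow> E (butlast P ! i) (butlast P ! Suc i)"
    using adj nbP lb by auto
  have wl: "w = P ! (n - 1)" using lP Pne n_def by (simp add: last_conv_nth)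
  have uQ: "last (butlast P) = P ! (n - 2)"
  proof -
    have a1: "last (butlast P) = butlast P ! (length (butlast P) - 1)" using Qne by (rule last_conv_nth)
    have a2: "length (butlast P) - 1 = n - 2" using lb by simp
    have a3: "n - 2 < n - 1" using n2 by simp
    show ?thesis using a1 a2 nbP[OF a3] by simp
  qed
  have "E (P ! (n - 2)) (P ! Suc (n - 2))" using adj n2 n_def by simp
  moreover have "Suc (n - 2) = n - 1" using n2 by simp
  ultimately have Euw: "E (last (butlast P)) w" using uQ wl by simp
  have rest: "\<forall>y\<in>set (butlast (butlast P)). y \<noteq> w \<and> \<not> E y w"
  proof
    fix y assume y: "y \<in> set (butlast (butlast P))"
    have lbb: "length (butlast (butlast P)) = n - 2" using lb by simp
    obtain j where j: "j < n - 2" and yj: "y = butlast (butlast P) ! j"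
      using y lbb by (metis in_set_conv_nth)
    have yP: "y = P ! j" using yj j lb nbP by (simp add: nth_butlast)
    have yw: "y \<noteq> w" using yP wl dP j n_def n2 by (simp add: nth_eq_iff_index_eq)
    have "\<not> E y w"
    proof
      assume Eyw: "E y w"
      define q where "q = take (Suc j) P @ [w]"
      have lq: "length q = j + 2" unfolding q_def using j n_def by simp
      have wnt: "w \<notin> set (take (Suc j) P)"
      proof
        assume "w \<in> set (take (Suc j) P)"
        then obtain i where i: "i < length (take (Suc j) P)" "take (Suc j) P ! i = w"
          by (metis in_set_conv_nth)
        then have "P ! i = P ! (n - 1)" "i < n" "i \<le> j" using wl j n_def by auto
        then show False using dP n_def j n2 by (simp add: nth_eq_iff_index_eq)
      qed
      have "is_path V E q"
        unfolding is_path_def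
      proof (intro conjI allI impI)
        show "q \<noteq> []" unfolding q_def by simp
        show "set q \<subseteq> V" unfolding q_def using PV set_take_subset[of "Suc j" P] wl n_def n2
          by (metis (no_types, lifting) Pne dual_order.trans empty_subsetI insert_subset last_in_set lP list.set(1) list.set(2) set_append subset_code(1) Un_least)
        show "distinct q" unfolding q_def using dP wnt by simp
      next
        fix i assume i: "Suc i < length q"
        show "E (q ! i) (q ! Suc i)"
        proof (cases "Suc i \<le> j")
          case True
          then have "q ! i = P ! i" "q ! Suc i = P ! Suc i" unfolding q_def using j n_def
            by (auto simp: nth_append)
          then show ?thesis using adj True j n_def by simp
        next
          case False
          then have "i = j" using i lq by simp
          then have "q ! i = P ! j" "q ! Suc i = w" unfolding q_def using j n_def
            by (auto simp: nth_append)
          then show ?thesis using Eyw yP by simp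
        qed
      qed
      moreover have "hd q = v" unfolding q_def using hP Pne by (cases P) auto
      moreover have "last q = w" unfolding q_def by simp
      ultimately have "length P \<le> length q" using mn by blast
      then show False using lq j n_def by simp
    qed
    then show "y \<noteq> w \<and> \<not> E y w" using yw by simp
  qed
  show ?thesis using Qne hQ QV adjQ Euw rest lb n2 by auto
qed

lemma prop_agree:
  assumes g: "graph V E" and r: "recol_seq V E L \<phi> S \<psi>" and s: "fst ` set S \<subseteq> B"
    and b: "\<forall>y\<in>B. y \<noteq> w \<and> \<not> E y w"
  shows "\<forall>y\<in>insert w (nbhd V E w). \<psi> y = \<phi> y"
proof
  fix y assume y: "y \<in> insert w (nbhd V E w)"
  have "y \<notin> B"
  proof
    assume yB: "y \<in> B"
    then have "y \<noteq> w" "\<not> E y w" using b by auto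
    then show False using y g unfolding nbhd_def graph_def by auto
  qed
  then show "\<psi> y = \<phi> y" using recol_seq_outside[OF r] s by blast
qed


theorem mainTheorem7:
  fixes V :: "'a set" and E :: "'a \<Rightarrow> 'a \<Rightarrow> bool" and L :: "'a \<Rightarrow> 'c set"
    and \<alpha> \<beta> :: "'a \<Rightarrow> 'c" and v w :: 'a and P :: "'a list"
  assumes "graph V E" and "connected_graph V E"
    and "\<forall>u\<in>V. card (L u) \<ge> deg V E u + 1"
    and "v \<in> V" and "card (L v) \<ge> deg V E v + 2"
    and "L_colouring V E L \<alpha>" and "unfrozen_colouring V E L \<alpha>"
    and "L_colouring V E L \<beta>" and "unfrozen_colouring V E L \<beta>"
    and "w \<in> V"
    and "shortest_path V E v w P"
  shows "\<exists>S \<gamma>. recol_seq V E L \<alpha> S \<gamma> \<and> \<gamma> w = \<beta> w \<and> \<not> frozen V E L \<gamma> v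
           \<and> fst ` set S \<subseteq> set P \<union> (nbhd V E w \<inter> {x. \<alpha> x = \<beta> w})
           \<and> length S \<le> deg V E w + 2 + 2 * length P"
proof -
  note g = assms(1)
  have dc: "\<forall>u\<in>V. deg V E u + 1 \<le> card (L u)" using assms(3) by simp
  note v = assms(4) and s = assms(5) and colA = assms(6) and w = assms(10) and sp = assms(11)
  define c where "c = \<beta> w"
  have cL: "c \<in> L w" unfolding c_def using assms(8) w by (rule col_in)
  have ip: "is_path V E P" and lP: "last P = w" using sp unfolding shortest_path_def by auto
  have wP: "w \<in> set P" using ip lP unfolding is_path_def by auto
  have wn: "w \<notin> nbhd V E w" using g unfolding graph_def nbhd_def by auto
  have cnset: "cn V E \<alpha> w c = nbhd V E w \<inter> {x. \<alpha> x = \<beta> w}" unfolding cn_def c_def by auto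
  have cnA: "card (cn V E \<alpha> w c) \<le> deg V E w" by (rule cn_card[OF g])
  have sym: "\<And>x y. E x y \<Longrightarrow> E y x" using g unfolding graph_def by blast
  have key: "\<exists>S \<gamma>. recol_seq V E L \<alpha> S \<gamma> \<and> \<gamma> w = c \<and> fst ` set S \<subseteq> set P \<union> cn V E \<alpha> w c
           \<and> length S \<le> deg V E w + 2 + 2 * length P"
  proof (cases "\<alpha> w = c")
    case True
    then show ?thesis using recol_seq_nil[OF colA] by (intro exI[of _ "[]"] exI[of _ \<alpha>]) auto
  next
    case aNc: False
    obtain S1 \<psi>1 where p: "recol_seq V E L \<alpha> S1 \<psi>1" and p1: "fst ` set S1 \<subseteq> cn V E \<alpha> w c"
      and p2: "\<forall>y. y \<notin> cn V E \<alpha> w c \<longrightarrow> \<psi>1 y = \<alpha> y" and p3: "cn V E \<psi>1 w c \<subseteq> cn V E \<alpha> w c"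
      and p4: "length S1 + card (cn V E \<psi>1 w c) \<le> card (cn V E \<alpha> w c)"
      and p5: "\<forall>x\<in>cn V E \<psi>1 w c. frozen V E L \<psi>1 x \<and> frozen V E L \<alpha> x"
      using phase1[OF g dc w colA, of c] by blast
    have col1: "L_colouring V E L \<psi>1" using recol_seq_col[OF p] .
    have psw: "\<psi>1 w = \<alpha> w" using p2 wn unfolding cn_def by auto
    show ?thesis
    proof (cases "cn V E \<psi>1 w c = {} \<or> \<not> frozen V E L \<psi>1 w")
      case True
      obtain S2 \<gamma> where r: "recol_seq V E L \<psi>1 S2 \<gamma>" "\<gamma> w = c" "fst ` set S2 \<subseteq> insert w (cn V E \<psi>1 w c)"
        "length S2 \<le> card (cn V E \<psi>1 w c) + 2"
      proof -
        have h1: "\<psi>1 w \<noteq> c" using psw aNc by simp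
        have h2: "\<forall>x\<in>cn V E \<psi>1 w c. frozen V E L \<psi>1 x" using p5 by blast
        have h3: "cn V E \<psi>1 w c \<noteq> {} \<longrightarrow> \<not> frozen V E L \<psi>1 w" using True by blast
        show ?thesis using finishB[OF g dc w col1 cL h1 h2 h3] that by blast
      qed
      show ?thesis using recol_seq_trans[OF p r(1)] r p1 p3 p4 cnA wP
        by (intro exI[of _ "S1 @ S2"] exI[of _ \<gamma>]) auto
    next
      case False
      then have ne1: "cn V E \<psi>1 w c \<noteq> {}" and frw: "frozen V E L \<psi>1 w" by auto
      have vw: "v \<noteq> w" using frw slack_unfrozen[OF g col1 v s] by auto
      obtain xs where xs: "xs \<in> cn V E \<psi>1 w c" using ne1 by blast
      from frozen_counts[OF g dc col1 w frw] have inj1: "inj_on \<psi>1 (nbhd V E w)" by simp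
      have cn1: "cn V E \<psi>1 w c = {xs}"
      proof
        show "cn V E \<psi>1 w c \<subseteq> {xs}"
        proof
          fix z assume "z \<in> cn V E \<psi>1 w c"
          then show "z \<in> {xs}" using xs inj1 unfolding cn_def by (auto dest: inj_onD)
        qed
      qed (use xs in auto)
      have len1: "length S1 + 1 \<le> deg V E w" using p4 cn1 cnA by simp
      define Q where "Q = butlast P"
      have spf: "Q \<noteq> [] \<and> hd Q = v \<and> set Q \<subseteq> V
        \<and> (\<forall>i. Suc i < length Q \<longrightarrow> E (Q ! i) (Q ! Suc i))
        \<and> E (last Q) w \<and> length Q + 1 = length P
        \<and> (\<forall>y\<in>set (butlast Q). y \<noteq> w \<and> \<not> E y w)"
        unfolding Q_def using sp_facts[OF g sp vw] .
      then have Qne: "Q \<noteq> []" and hQ: "hd Q = v" and QV: "set Q \<subseteq> V"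
        and adjQ: "\<forall>i. Suc i < length Q \<longrightarrow> E (Q ! i) (Q ! Suc i)"
        and Euw: "E (last Q) w" and lQ: "length Q + 1 = length P"
        and bQ: "\<forall>y\<in>set (butlast Q). y \<noteq> w \<and> \<not> E y w" by auto
      define u where "u = last Q"
      have uP: "u \<in> set P" unfolding u_def Q_def using Qne Q_def
        by (metis in_set_butlastD last_in_set)
      have bQP: "set (butlast Q) \<subseteq> set P" unfolding Q_def by (auto dest: in_set_butlastD)
      have uV: "u \<in> V" unfolding u_def using Qne QV by auto
      have unw: "u \<in> nbhd V E w" using Euw sym uV unfolding u_def nbhd_def by auto
      have uw: "u \<noteq> w" using unw wn by auto
      obtain S2 \<chi>1 where q: "recol_seq V E L \<psi>1 S2 \<chi>1" and q1: "fst ` set S2 \<subseteq> set (butlast Q)"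
        and q2: "length S2 + 1 \<le> length Q" and q3: "\<not> frozen V E L \<chi>1 u"
        using propagate[OF g dc v s col1 Qne hQ QV adjQ] unfolding u_def by blast
      have colc: "L_colouring V E L \<chi>1" using recol_seq_col[OF q] .
      have ag: "\<forall>y\<in>insert w (nbhd V E w). \<chi>1 y = \<psi>1 y" using prop_agree[OF g q q1 bQ] .
      have cnc: "cn V E \<chi>1 w c = {xs}" using cn1 ag unfolding cn_def by auto
      have chw: "\<chi>1 w = \<alpha> w" using ag psw by simp
      have frc: "frozen V E L \<chi>1 w" using frw frozen_agree[OF ag] by simp
      have xsc: "xs \<in> nbhd V E w" "\<chi>1 xs = c" using cnc unfolding cn_def by auto
      have xsV: "xs \<in> V" using xsc(1) unfolding nbhd_def by auto
      have xsw: "xs \<noteq> w" using xsc wn by auto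
      have len2: "length S1 + length S2 + 3 \<le> deg V E w + length P" using len1 q2 lQ by simp
      have lP2: "length P \<ge> 2" using lQ Qne by (cases Q) auto
      show ?thesis
      proof (cases "frozen V E L \<chi>1 xs")
        case False
        obtain S3 \<gamma> where r: "recol_seq V E L \<chi>1 S3 \<gamma>" "\<gamma> w = c" "fst ` set S3 \<subseteq> {xs, w}" "length S3 \<le> 3"
        proof -
          have h0: "\<chi>1 w \<noteq> c" using chw aNc by simp
          have sub: "cn V E \<chi>1 w c \<subseteq> {xs}" using cnc by simp
          have cond: "xs \<in> cn V E \<chi>1 w c \<and> frozen V E L \<chi>1 xs \<longrightarrow> \<not> frozen V E L \<chi>1 w" using False by blast
          show ?thesis using finishC[OF g dc w colc cL h0 sub cond] that by blast
        qed
        have "recol_seq V E L \<alpha> (S1 @ S2 @ S3) \<gamma>" using recol_seq_trans[OF p recol_seq_trans[OF q r(1)]] .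
        moreover have "xs \<in> cn V E \<alpha> w c" using cn1 p3 by auto
        ultimately show ?thesis using r p1 q1 bQP wP len2 lP2
          by (intro exI[of _ "S1 @ S2 @ S3"] exI[of _ \<gamma>]) auto
      next
        case True
        have uxs: "u \<noteq> xs" using True q3 by auto
        from frozen_counts[OF g dc colc w frc] have injc: "inj_on \<chi>1 (nbhd V E w)"
          and imc: "\<chi>1 ` nbhd V E w = L w - {\<chi>1 w}" by auto
        define b where "b = \<chi>1 u"
        have bL: "b \<in> L w - {\<chi>1 w}" unfolding b_def using imc unw by blast
        have bc: "b \<noteq> c" unfolding b_def using injc unw xsc uxs by (auto dest: inj_onD)
        have bonly: "\<And>z. z \<in> nbhd V E w \<Longrightarrow> \<chi>1 z = b \<Longrightarrow> z = u"
          unfolding b_def using injc unw by (auto dest: inj_onD)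
        obtain f where f: "f \<in> L u - {\<chi>1 u}" and fn: "\<forall>y\<in>nbhd V E u. \<chi>1 y \<noteq> f"
          using unfrozen_free[OF q3] by blast
        define \<theta> where "\<theta> = \<chi>1(u:=f)"
        have colt: "L_colouring V E L \<theta>" unfolding \<theta>_def using recolour_ok[OF g colc uV _ fn] f by blast
        have st: "recol_seq V E L \<chi>1 [(u,f)] \<theta>" unfolding \<theta>_def
          using recol_seq_single[OF colc uV] f colt \<theta>_def by auto
        have tw: "\<theta> w = \<alpha> w" unfolding \<theta>_def using uw chw by simp
        have xsP: "xs \<in> cn V E \<alpha> w c" using cn1 p3 by auto
        show ?thesis
        proof (cases "f = c")
          case False
          have sub: "cn V E \<theta> w c \<subseteq> {xs}" using cnc False unfolding cn_def \<theta>_def by auto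
          have "\<not> frozen V E L \<theta> w"
          proof -
            have "b \<in> L w - {\<theta> w}" using bL tw chw by simp
            moreover have "\<forall>z\<in>nbhd V E w. \<theta> z \<noteq> b"
            proof
              fix z assume z: "z \<in> nbhd V E w"
              show "\<theta> z \<noteq> b"
              proof (cases "z = u")
                case True then show ?thesis unfolding \<theta>_def b_def using f by auto
              next
                case False then show ?thesis unfolding \<theta>_def using bonly z by auto
              qed
            qed
            ultimately show ?thesis unfolding frozen_def by blast
          qed
          then have cond: "xs \<in> cn V E \<theta> w c \<and> frozen V E L \<theta> xs \<longrightarrow> \<not> frozen V E L \<theta> w" by blast
          have h0: "\<theta> w \<noteq> c" using tw aNc by simp
          obtain S4 \<gamma> where r: "recol_seq V E L \<theta> S4 \<gamma>" "\<gamma> w = c" "fst ` set S4 \<subseteq> {xs, w}" "length S4 \<le> 3"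
            using finishC[OF g dc w colt cL h0 sub cond] by blast
          have "recol_seq V E L \<alpha> (S1 @ S2 @ [(u,f)] @ S4) \<gamma>"
            using recol_seq_trans[OF p recol_seq_trans[OF q recol_seq_trans[OF st r(1)]]] .
          then show ?thesis using r p1 q1 bQP wP len2 lP2 xsP uP
            by (intro exI[of _ "S1 @ S2 @ [(u,f)] @ S4"] exI[of _ \<gamma>]) auto
        next
          case True
          have xsnu: "xs \<notin> nbhd V E u" using fn xsc True by auto
          have unxs: "u \<notin> nbhd V E xs" using xsnu sym uV xsV unfolding nbhd_def by auto
          define \<theta>2 where "\<theta>2 = \<theta>(w:=b)"
          have tnb: "\<forall>z\<in>nbhd V E w. \<theta> z \<noteq> b"
          proof
            fix z assume z: "z \<in> nbhd V E w"
            show "\<theta> z \<noteq> b"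
            proof (cases "z = u")
              case True then show ?thesis unfolding \<theta>_def using \<open>f = c\<close> bc by auto
            next
              case False then show ?thesis unfolding \<theta>_def using bonly z by auto
            qed
          qed
          have colt2: "L_colouring V E L \<theta>2" unfolding \<theta>2_def using recolour_ok[OF g colt w _ tnb] bL by blast
          have st2: "recol_seq V E L \<theta> [(w,b)] \<theta>2" unfolding \<theta>2_def
            using recol_seq_single[OF colt w] bL tw chw colt2 \<theta>2_def by auto
          have "\<forall>y\<in>insert xs (nbhd V E xs). \<theta> y = \<chi>1 y" unfolding \<theta>_def using uxs unxs by auto
          then have "frozen V E L \<theta> xs = frozen V E L \<chi>1 xs" by (rule frozen_agree)
          then have frt: "frozen V E L \<theta> xs" using \<open>frozen V E L \<chi>1 xs\<close> by simp
          have wnxs: "w \<in> nbhd V E xs" using xsc(1) sym w unfolding nbhd_def by auto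
          have nf2: "\<not> frozen V E L \<theta>2 xs" unfolding \<theta>2_def
            using unfreeze_nbr[OF g dc colt xsV frt wnxs, of b] bL tw chw by auto
          obtain h where h: "h \<in> L xs - {\<theta>2 xs}" and hn: "\<forall>y\<in>nbhd V E xs. \<theta>2 y \<noteq> h"
            using unfrozen_free[OF nf2] by blast
          have t2xs: "\<theta>2 xs = c" unfolding \<theta>2_def \<theta>_def using xsw uxs xsc by auto
          define \<theta>3 where "\<theta>3 = \<theta>2(xs:=h)"
          have colt3: "L_colouring V E L \<theta>3" unfolding \<theta>3_def using recolour_ok[OF g colt2 xsV _ hn] h by blast
          have st3: "recol_seq V E L \<theta>2 [(xs,h)] \<theta>3" unfolding \<theta>3_def
            using recol_seq_single[OF colt2 xsV] h colt3 \<theta>3_def by auto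
          have sub3: "cn V E \<theta>3 w c \<subseteq> {u}"
          proof
            fix z assume z: "z \<in> cn V E \<theta>3 w c"
            then have zn: "z \<in> nbhd V E w" and zc: "\<theta>3 z = c" unfolding cn_def by auto
            have "z \<noteq> xs" using zc h t2xs unfolding \<theta>3_def by auto
            moreover have "z \<noteq> w" using zn wn by auto
            moreover have "z \<noteq> u \<Longrightarrow> z = xs" using zc zn cnc calculation
              unfolding \<theta>3_def \<theta>2_def \<theta>_def cn_def by auto
            ultimately show "z \<in> {u}" by auto
          qed
          have t3w: "\<theta>3 w = b" unfolding \<theta>3_def \<theta>2_def using xsw by simp
          have seqA: "recol_seq V E L \<alpha> (S1 @ S2 @ [(u,f)] @ [(w,b)] @ [(xs,h)]) \<theta>3"
            using recol_seq_trans[OF p recol_seq_trans[OF q recol_seq_trans[OF st recol_seq_trans[OF st2 st3]]]] .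
          show ?thesis
          proof (cases "frozen V E L \<theta>3 u")
            case False
            obtain S5 \<gamma> where r: "recol_seq V E L \<theta>3 S5 \<gamma>" "\<gamma> w = c" "fst ` set S5 \<subseteq> {u, w}" "length S5 \<le> 3"
            proof -
              have h0: "\<theta>3 w \<noteq> c" using t3w bc by simp
              have cond: "u \<in> cn V E \<theta>3 w c \<and> frozen V E L \<theta>3 u \<longrightarrow> \<not> frozen V E L \<theta>3 w" using False by blast
              show ?thesis using finishC[OF g dc w colt3 cL h0 sub3 cond] that by blast
            qed
            have "recol_seq V E L \<alpha> ((S1 @ S2 @ [(u,f)] @ [(w,b)] @ [(xs,h)]) @ S5) \<gamma>"
              using recol_seq_trans[OF seqA r(1)] .
            then show ?thesis using r p1 q1 bQP wP len2 lP2 xsP uP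
              by (intro exI[of _ "(S1 @ S2 @ [(u,f)] @ [(w,b)] @ [(xs,h)]) @ S5"] exI[of _ \<gamma>]) auto
          next
            case True
            obtain S6 \<theta>4 where q': "recol_seq V E L \<theta>3 S6 \<theta>4" and q1': "fst ` set S6 \<subseteq> set (butlast Q)"
              and q2': "length S6 + 1 \<le> length Q" and q3': "\<not> frozen V E L \<theta>4 u"
              using propagate[OF g dc v s colt3 Qne hQ QV adjQ] unfolding u_def by blast
            have colt4: "L_colouring V E L \<theta>4" using recol_seq_col[OF q'] .
            have ag': "\<forall>y\<in>insert w (nbhd V E w). \<theta>4 y = \<theta>3 y" using prop_agree[OF g q' q1' bQ] .
            have sub4: "cn V E \<theta>4 w c \<subseteq> {u}" using sub3 ag' unfolding cn_def by auto
            have t4w: "\<theta>4 w = b" using ag' t3w by simp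
            obtain S5 \<gamma> where r: "recol_seq V E L \<theta>4 S5 \<gamma>" "\<gamma> w = c" "fst ` set S5 \<subseteq> {u, w}" "length S5 \<le> 3"
            proof -
              have h0: "\<theta>4 w \<noteq> c" using t4w bc by simp
              have cond: "u \<in> cn V E \<theta>4 w c \<and> frozen V E L \<theta>4 u \<longrightarrow> \<not> frozen V E L \<theta>4 w" using q3' by blast
              show ?thesis using finishC[OF g dc w colt4 cL h0 sub4 cond] that by blast
            qed
            have "recol_seq V E L \<alpha> ((S1 @ S2 @ [(u,f)] @ [(w,b)] @ [(xs,h)]) @ S6 @ S5) \<gamma>"
              using recol_seq_trans[OF seqA recol_seq_trans[OF q' r(1)]] .
            then show ?thesis using r p1 q1 q1' bQP wP len2 lP2 xsP uP q2' lQ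
              by (intro exI[of _ "(S1 @ S2 @ [(u,f)] @ [(w,b)] @ [(xs,h)]) @ S6 @ S5"] exI[of _ \<gamma>]) auto
          qed
        qed
      qed
    qed
  qed
  then obtain S \<gamma> where k: "recol_seq V E L \<alpha> S \<gamma>" "\<gamma> w = c" "fst ` set S \<subseteq> set P \<union> cn V E \<alpha> w c"
    "length S \<le> deg V E w + 2 + 2 * length P" by blast
  have "\<not> frozen V E L \<gamma> v" using slack_unfrozen[OF g recol_seq_col[OF k(1)] v s] .
  then show ?thesis using k cnset c_def by (intro exI[of _ S] exI[of _ \<gamma>]) auto
qed

end
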